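(* Assume $\overline{c}>p$. Then there exist constants $K_2>0$ and $K_3>0$ such that $$V(x_2,c)-V(x_1,c)\le\left[K_2+\frac{K_3}{c-p}\right](x_2-x_1)$$ for all $0\le x_1\le x_2$ and $p<c\le\overline{c}$.
   Context: Cramér–Lundberg model: the uncontrolled surplus is $X_t=x+pt-\sum_{i=1}^{N_t}U_i$, where $x\ge0$ is the initial surplus, $p>0$ the premium rate, $N_t$ a Poisson process with intensity $\beta>0$, and the claims $U_i$ are i.i.d. positive random variables, independent of $N$, with continuous distribution function $F$; $p>\beta\mathbb{E}[U_1]$. Standing assumption (A1): $F$ is globally Lipschitz, $0\le F(y)-F(x)\le K(y-x)$ for $x<y$. Let $(\mathcal{F}_t)$ be the completed filtration generated by $X$. Fix $\overline{c}>0$ and $q>0$. $\Pi_{x,c,\overline{c}}$ is the set of càdlàg, adapted, non-decreasing processes $C$ with $c\le C_t\le\overline{c}$; $X^C_t=X_t-\int_0^tC_sds$ ($X_0=x$), $\tau=\inf\{t\ge0:X^C_t<0\}$, $J(x;C)=\mathbb{E}[\int_0^\tau e^{-qs}C_sds]$, $V(x,c)=\sup_{C\in\Pi_{x,c,\overline{c}}}J(x;C)$. *)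

theory Defs
  imports "HOL-Probability.Probability"
begin

text \<open>E n : i.i.d. Exp(beta) inter-arrival times, so the claim arrival times are
  S_n = E_0 + ... + E_(n-1) (n >= 1) and N_t = number of arrivals in [0,t] is a
  Poisson process with intensity beta.  U n : the claim sizes (claim number n+1).\<close>

definition arrival :: "(nat \<Rightarrow> 'a \<Rightarrow> real) \<Rightarrow> nat \<Rightarrow> 'a \<Rightarrow> real" where
  "arrival E n \<omega> = (\<Sum>i<n. E i \<omega>)"

definition Npoisson :: "(nat \<Rightarrow> 'a \<Rightarrow> real) \<Rightarrow> real \<Rightarrow> 'a \<Rightarrow> nat" where
  "Npoisson E t \<omega> = card {n::nat. 1 \<le> n \<and> arrival E n \<omega> \<le> t}"

definition surplus :: "real \<Rightarrow> real \<Rightarrow> (nat \<Rightarrow> 'a \<Rightarrow> real) \<Rightarrow> (nat \<Rightarrow> 'a \<Rightarrow> real)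
    \<Rightarrow> real \<Rightarrow> 'a \<Rightarrow> real" where
  "surplus x p E U t \<omega> = x + p * t - (\<Sum>i<Npoisson E t \<omega>. U i \<omega>)"

definition filt :: "'a measure \<Rightarrow> (real \<Rightarrow> 'a \<Rightarrow> real) \<Rightarrow> real \<Rightarrow> 'a measure" where
  "filt M X t = sigma (space M)
     ({X s -` B \<inter> space M | s B. 0 \<le> s \<and> s \<le> t \<and> B \<in> sets borel} \<union> null_sets M)"

definition admissible :: "'a measure \<Rightarrow> (real \<Rightarrow> 'a \<Rightarrow> real) \<Rightarrow> real \<Rightarrow> real
    \<Rightarrow> (real \<Rightarrow> 'a \<Rightarrow> real) set" where
  "admissible M X c cbar = {C.
     (\<forall>t\<ge>0. (\<lambda>\<omega>. C t \<omega>) \<in> borel_measurable (filt M X t)) \<and>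
     (\<forall>\<omega>\<in>space M.
        (\<forall>t\<ge>0. c \<le> C t \<omega> \<and> C t \<omega> \<le> cbar) \<and>
        mono_on {0..} (\<lambda>t. C t \<omega>) \<and>
        (\<forall>t\<ge>0. continuous (at_right t) (\<lambda>s. C s \<omega>)) \<and>
        (\<forall>t>0. \<exists>l. ((\<lambda>s. C s \<omega>) \<longlongrightarrow> l) (at_left t)))}"

definition ctrl_surplus :: "(real \<Rightarrow> 'a \<Rightarrow> real) \<Rightarrow> (real \<Rightarrow> 'a \<Rightarrow> real) \<Rightarrow> real \<Rightarrow> 'a \<Rightarrow> real" where
  "ctrl_surplus X C t \<omega> = X t \<omega> - integral {0..t} (\<lambda>s. C s \<omega>)"

text \<open>Ruin time tau = inf {t >= 0. X^C_t < 0} (= infinity if never ruined).\<close>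
definition ruin_time :: "(real \<Rightarrow> 'a \<Rightarrow> real) \<Rightarrow> (real \<Rightarrow> 'a \<Rightarrow> real) \<Rightarrow> 'a \<Rightarrow> ereal" where
  "ruin_time X C \<omega> = Inf (ereal ` {t. 0 \<le> t \<and> ctrl_surplus X C t \<omega> < 0})"

definition Jval :: "'a measure \<Rightarrow> real \<Rightarrow> (real \<Rightarrow> 'a \<Rightarrow> real) \<Rightarrow> (real \<Rightarrow> 'a \<Rightarrow> real) \<Rightarrow> ennreal" where
  "Jval M q X C = (\<integral>\<^sup>+ \<omega>. (\<integral>\<^sup>+ s. ennreal (indicator {s. 0 \<le> s \<and> ereal s < ruin_time X C \<omega>} s
        * exp (- q * s) * C s \<omega>) \<partial>lborel) \<partial>M)"

text \<open>Value function V(x,c) = sup over Pi_{x,c,cbar} of J(x;C) (finite, <= cbar/q).\<close>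
definition Vfun :: "'a measure \<Rightarrow> real \<Rightarrow> real \<Rightarrow> real \<Rightarrow> (nat \<Rightarrow> 'a \<Rightarrow> real)
    \<Rightarrow> (nat \<Rightarrow> 'a \<Rightarrow> real) \<Rightarrow> real \<Rightarrow> real \<Rightarrow> real" where
  "Vfun M p q cbar E U x c =
     enn2real (SUP C \<in> admissible M (surplus x p E U) c cbar. Jval M q (surplus x p E U) C)"

end

theory Submission
  imports Defs
begin

lemma nn_integral_add_simple_le:
  assumes h: "simple_function M h"
  shows "(\<integral>\<^sup>+x. f x + h x \<partial>M) \<le> integral\<^sup>N M f + integral\<^sup>N M h"
proof -
  have "integral\<^sup>S M g \<le> integral\<^sup>N M f + integral\<^sup>N M h"
    if g: "simple_function M g" "g \<le> (\<lambda>x. f x + h x)" "\<forall>x. g x < top" for g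
  proof -
    have sd: "simple_function M (\<lambda>x. g x - h x)" using simple_function_compose2[OF g(1) h] .
    have "integral\<^sup>S M g = integral\<^sup>N M g" by (simp add: nn_integral_eq_simple_integral g)
    also have "\<dots> \<le> (\<integral>\<^sup>+x. (g x - h x) + h x \<partial>M)"
      by (intro nn_integral_mono) (use diff_add_self_ennreal in auto)
    also have "\<dots> = (\<integral>\<^sup>+x. (g x - h x) \<partial>M) + integral\<^sup>N M h"
      by (rule nn_integral_add) (auto intro: borel_measurable_simple_function sd h)
    also have "(\<integral>\<^sup>+x. (g x - h x) \<partial>M) \<le> integral\<^sup>N M f"
      proof (intro nn_integral_mono)
      fix x
      have "g x \<le> f x + h x" "g x < top" using g(2,3) by (auto simp: le_fun_def)
      then show "g x - h x \<le> f x" by (auto simp: ennreal_minus_le_iff add.commute)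
    qed
    finally show ?thesis by (simp add: add_right_mono)
  qed
  then show ?thesis
    by (subst nn_integral_def_finite) (auto intro!: SUP_least)
qed

lemma erlang_CDF_lim:
  assumes "0 < l" "0 \<le> T"
  shows "(\<lambda>n. erlang_CDF n l T) \<longlonglongrightarrow> 0"
proof -
  have s: "(\<lambda>n. (l*T)^n / fact n) sums exp (l*T)"
    using exp_converges[of "l*T"] by (simp add: divide_inverse mult.commute)
  then have "(\<lambda>n. \<Sum>j\<le>n. (l*T)^j / fact j) \<longlonglongrightarrow> exp (l*T)"
    by (simp add: sums_def_le)
  then have "(\<lambda>n. 1 - (\<Sum>j\<le>n. (l*T)^j / fact j) * exp (- l * T)) \<longlonglongrightarrow> 1 - exp (l*T) * exp (- l * T)"
    by (intro tendsto_intros)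
  moreover have "exp (l*T) * exp (- l * T) = 1" by (simp add: exp_minus field_simps)
  moreover have "erlang_CDF n l T = 1 - (\<Sum>j\<le>n. (l*T)^j / fact j) * exp (- l * T)" for n
    using assms by (simp add: erlang_CDF_def sum_distrib_right)
  ultimately show ?thesis by simp
qed

lemma arrivals_AE:
  fixes E U :: "nat \<Rightarrow> 'a \<Rightarrow> real"
  assumes "prob_space M" "\<beta> > 0"
    and ind: "prob_space.indep_vars M (\<lambda>_. borel)
           (\<lambda>i. case i of Inl n \<Rightarrow> E n | Inr n \<Rightarrow> U n) UNIV"
    and D: "\<And>n. distributed M lborel (E n) (exponential_density \<beta>)"
  shows "AE \<omega> in M. \<forall>T::nat. finite {n. arrival E n \<omega> \<le> real T}"
proof -
  interpret prob_space M by fact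
  have Emeas[measurable]: "E n \<in> borel_measurable M" for n
    using distributed_measurable[OF D[of n]] by simp
  have pos: "AE \<omega> in M. \<forall>i. 0 < E i \<omega>"
  proof (subst AE_all_countable, intro allI)
    fix i
    have "prob {\<omega>\<in>space M. E i \<omega> \<le> 0} = 0"
      using exponential_distributedD_le[OF D[of i] _ \<open>\<beta> > 0\<close>, of 0] by simp
    then have "{\<omega>\<in>space M. E i \<omega> \<le> 0} \<in> null_sets M"
      by (simp add: emeasure_eq_measure null_sets_def)
    then show "AE \<omega> in M. 0 < E i \<omega>"
      by (rule AE_I') auto
  qed
  have dist: "distributed M lborel (arrival E (Suc n)) (erlang_density n \<beta>)" for n
  proof -
    let ?Y = "\<lambda>i. case i of Inl k \<Rightarrow> E k | Inr k \<Rightarrow> U k"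
    have "distributed M lborel (\<lambda>x. \<Sum>i\<in>Inl ` {..<Suc n}. ?Y i x)
        (erlang_density (card (Inl ` {..<Suc n} :: (nat + nat) set) - 1) \<beta>)"
    proof (rule exponential_distributed_sum[of "Inl ` {..<Suc n}" \<beta> ?Y])
      show "indep_vars (\<lambda>i. borel) ?Y (Inl ` {..<Suc n})"
        by (rule indep_vars_subset[OF ind]) auto
      fix i assume "i \<in> (Inl ` {..<Suc n} :: (nat + nat) set)"
      then obtain k where "i = Inl k" by auto
      then show "distributed M lborel (?Y i) (exponential_density \<beta>)" using D by simp
    qed (use \<open>\<beta> > 0\<close> in auto)
    moreover have "(\<lambda>x. \<Sum>i\<in>Inl ` {..<Suc n}. ?Y i x) = arrival E (Suc n)"
      by (auto simp: arrival_def sum.reindex fun_eq_iff)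
    moreover have "card (Inl ` {..<Suc n} :: (nat + nat) set) = Suc n"
      by (simp add: card_image)
    ultimately show ?thesis by simp
  qed
  have bad: "AE \<omega> in M. \<exists>n. real T < arrival E (Suc n) \<omega>" for T :: nat
  proof -
    let ?B = "{\<omega>\<in>space M. \<forall>n. arrival E (Suc n) \<omega> \<le> real T}"
    have Bm: "?B \<in> sets M" unfolding arrival_def by measurable
    have "measure M ?B \<le> erlang_CDF n \<beta> (real T)" for n
    proof -
      have "measure M ?B \<le> prob {\<omega>\<in>space M. arrival E (Suc n) \<omega> \<le> real T}"
        by (rule finite_measure_mono) (auto simp: arrival_def)
      also have "\<dots> = erlang_CDF n \<beta> (real T)"
        by (rule erlang_distributed_le[OF dist]) (use \<open>\<beta> > 0\<close> in auto)
      finally show ?thesis .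
    qed
    then have "measure M ?B \<le> 0"
      using erlang_CDF_lim[OF \<open>\<beta> > 0\<close>, of "real T"]
      by (intro tendsto_lowerbound[where F=sequentially]) (auto intro: always_eventually)
    then have "?B \<in> null_sets M"
      using Bm by (simp add: emeasure_eq_measure null_sets_def measure_le_0_iff)
    then show ?thesis
      by (rule AE_I') (auto simp: not_less)
  qed
  have "AE \<omega> in M. \<forall>T::nat. \<exists>n. real T < arrival E (Suc n) \<omega>"
    using bad by (subst AE_all_countable) auto
  with pos show ?thesis
  proof eventually_elim
    case (elim \<omega>)
    show ?case
    proof
      fix T :: nat
      obtain n where n: "real T < arrival E (Suc n) \<omega>" using elim(2) by blast
      have "{k. arrival E k \<omega> \<le> real T} \<subseteq> {..<Suc n}"
      proof
        fix k assume k: "k \<in> {k. arrival E k \<omega> \<le> real T}"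
        show "k \<in> {..<Suc n}"
        proof (rule ccontr)
          assume "k \<notin> {..<Suc n}"
          then have "{..<Suc n} \<subseteq> {..<k}" by auto
          then have "arrival E (Suc n) \<omega> \<le> arrival E k \<omega>"
            unfolding arrival_def using elim(1)
            by (intro sum_mono2) (auto intro: less_imp_le)
          then show False using k n by simp
        qed
      qed
      then show "finite {k. arrival E k \<omega> \<le> real T}" by (rule finite_subset) simp
    qed
  qed
qed

lemma core:
  fixes C :: "real \<Rightarrow> 'a \<Rightarrow> real"
  assumes fin: "\<forall>T::nat. finite {n. arrival E n \<omega> \<le> real T}"
    and Upos: "\<forall>i. 0 \<le> U i \<omega>"
    and Cb: "\<forall>t\<ge>0. c \<le> C t \<omega>" and mono: "mono_on {0..} (\<lambda>t. C t \<omega>)"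
    and pc: "p < c" and xxb: "xa \<le> xb"
    and r: "ruin_time (surplus xa p E U) C \<omega> = ereal r"
    and s0: "0 \<le> s" and s: "ereal s < ruin_time (surplus xb p E U) C \<omega>"
  shows "s \<le> r + (xb - xa)/(c-p)"
proof (rule ccontr)
  define \<delta> where "\<delta> = (xb - xa)/(c-p)"
  assume "\<not> s \<le> r + (xb - xa)/(c-p)"
  then have "r < s - \<delta>" by (simp add: \<delta>_def)
  then have "ruin_time (surplus xa p E U) C \<omega> < ereal (s - \<delta>)" using r by simp
  then obtain u where u0: "0 \<le> u" and u1: "ctrl_surplus (surplus xa p E U) C u \<omega> < 0"
    and us: "u < s - \<delta>"
    unfolding ruin_time_def Inf_less_iff by auto
  have d0: "0 \<le> \<delta>" using pc xxb by (simp add: \<delta>_def)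
  have dd: "(c - p) * \<delta> = xb - xa" using pc by (simp add: \<delta>_def)
  have us': "u \<le> s" using us d0 by simp
  let ?f = "\<lambda>t. C t \<omega>"
  have finS: "finite {n::nat. 1 \<le> n \<and> arrival E n \<omega> \<le> s}"
  proof (rule finite_subset)
    show "{n::nat. 1 \<le> n \<and> arrival E n \<omega> \<le> s} \<subseteq> {n. arrival E n \<omega> \<le> real (nat \<lceil>s\<rceil>)}"
      using s0 by auto (meson le_of_int_ceiling order_trans)
    show "finite {n. arrival E n \<omega> \<le> real (nat \<lceil>s\<rceil>)}" using fin by blast
  qed
  have NN: "Npoisson E u \<omega> \<le> Npoisson E s \<omega>"
    unfolding Npoisson_def using us' by (intro card_mono[OF finS]) auto
  have cl: "(\<Sum>i<Npoisson E u \<omega>. U i \<omega>) \<le> (\<Sum>i<Npoisson E s \<omega>. U i \<omega>)"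
    using NN Upos by (intro sum_mono2) auto
  have int0s: "?f integrable_on {0..s}"
    by (rule integrable_on_mono_on) (rule mono_on_subset[OF mono], auto)
  have comb: "integral {0..u} ?f + integral {u..s} ?f = integral {0..s} ?f"
    by (rule Henstock_Kurzweil_Integration.integral_combine[OF u0 us' int0s])
  have "integral {u..s} (\<lambda>_. c) \<le> integral {u..s} ?f"
    using int0s u0 us' Cb by (intro integral_le integrable_on_subinterval[OF int0s]) auto
  then have intge: "c * (s - u) \<le> integral {u..s} ?f"
    using us' by (simp add: content_real mult.commute)
  have "(c - p) * \<delta> \<le> (c - p) * (s - u)"
    using pc us by (intro mult_left_mono) auto
  then have key: "xb - xa \<le> (c - p) * (s - u)" using dd by simp
  have "ctrl_surplus (surplus xb p E U) C s \<omega> < 0"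
    using u1 cl comb intge key unfolding ctrl_surplus_def surplus_def
    by (simp add: algebra_simps)
  then have "ruin_time (surplus xb p E U) C \<omega> \<le> ereal s"
    unfolding ruin_time_def using s0 by (intro Inf_lower) auto
  then show False using s by simp
qed

lemma inner_bound:
  fixes C :: "real \<Rightarrow> 'a \<Rightarrow> real"
  assumes fin: "\<forall>T::nat. finite {n. arrival E n \<omega> \<le> real T}"
    and Upos: "\<forall>i. 0 \<le> U i \<omega>"
    and Cb: "\<forall>t\<ge>0. c \<le> C t \<omega> \<and> C t \<omega> \<le> cbar" and mono: "mono_on {0..} (\<lambda>t. C t \<omega>)"
    and pc: "p < c" and x12: "xa \<le> xb" and q: "0 < q" and c0: "0 < c"
  shows "(\<integral>\<^sup>+ s. ennreal (indicator {s. 0 \<le> s \<and> ereal s < ruin_time (surplus xb p E U) C \<omega>} s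
            * exp (- q * s) * C s \<omega>) \<partial>lborel)
     \<le> (\<integral>\<^sup>+ s. ennreal (indicator {s. 0 \<le> s \<and> ereal s < ruin_time (surplus xa p E U) C \<omega>} s
            * exp (- q * s) * C s \<omega>) \<partial>lborel) + ennreal (cbar * ((xb - xa)/(c-p)))"
    (is "?I2 \<le> ?I1 + _")
proof -
  define \<delta> where "\<delta> = (xb - xa)/(c-p)"
  have d0: "0 \<le> \<delta>" using pc x12 by (simp add: \<delta>_def)
  define \<tau>1 where "\<tau>1 = ruin_time (surplus xa p E U) C \<omega>"
  define \<tau>2 where "\<tau>2 = ruin_time (surplus xb p E U) C \<omega>"
  let ?g1 = "\<lambda>s. ennreal (indicator {s. 0 \<le> s \<and> ereal s < \<tau>1} s * exp (- q * s) * C s \<omega>)"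
  let ?g2 = "\<lambda>s. ennreal (indicator {s. 0 \<le> s \<and> ereal s < \<tau>2} s * exp (- q * s) * C s \<omega>)"
  have t1: "0 \<le> \<tau>1" unfolding \<tau>1_def ruin_time_def by (intro Inf_greatest) auto
  have ebound: "exp (- q * s) * C s \<omega> \<le> cbar" if "0 \<le> s" for s
  proof -
    have "exp (- q * s) \<le> 1" using q that by simp
    moreover have "0 \<le> C s \<omega>" "C s \<omega> \<le> cbar" using Cb c0 that by (auto intro: less_imp_le order_trans)
    ultimately show ?thesis using mult_mono[of "exp (- q * s)" 1 "C s \<omega>" cbar] by simp 
  qed
  have Cnn: "0 \<le> C s \<omega>" if "0 \<le> s" for s using Cb c0 that by (auto intro: less_imp_le order_trans)
  have "?I2 \<le> ?I1 + ennreal (cbar * \<delta>)"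
  proof (cases \<tau>1)
    case (real r)
    define h where "h = (\<lambda>s. ennreal cbar * indicator {r..r+\<delta>} s)"
    have pt: "?g2 s \<le> ?g1 s + h s" for s
    proof (cases "0 \<le> s \<and> ereal s < \<tau>2")
      case False
      then have "?g2 s = 0" by (auto simp: indicator_def)
      then show ?thesis by simp
    next
      case True
      note hs = this
      show ?thesis
      proof (cases "ereal s < \<tau>1")
        case True
        then show ?thesis using hs by (simp add: indicator_def)
      next
        case False
        have "s \<le> r + \<delta>"
          unfolding \<delta>_def
          using core[where E=E and \<omega>=\<omega> and U=U and c=c and C=C and p=p and xa=xa and xb=xb and r=r and s=s]
            fin Upos mono pc x12 Cb hs real by (auto simp: \<tau>1_def \<tau>2_def)
        moreover have "r \<le> s" using False real by simp
        ultimately have "h s = ennreal cbar" by (simp add: h_def)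
        moreover have "?g2 s \<le> ennreal cbar"
          using hs ebound[of s] by (simp add: indicator_def ennreal_leI)
        ultimately show ?thesis by (intro add_increasing) simp_all
      qed
    qed
    have sf: "simple_function lborel h" unfolding h_def
      by (intro simple_function_mult simple_function_const simple_function_indicator) auto
    have "?I2 \<le> (\<integral>\<^sup>+ s. ?g1 s + h s \<partial>lborel)"
      unfolding \<tau>1_def[symmetric] \<tau>2_def[symmetric] by (intro nn_integral_mono pt)
    also have "\<dots> \<le> ?I1 + integral\<^sup>N lborel h"
      unfolding \<tau>1_def by (rule nn_integral_add_simple_le[OF sf])
    also have "integral\<^sup>N lborel h = ennreal (cbar * \<delta>)"
      unfolding h_def using d0 c0 pc Cb[rule_format, of 0]
      by (subst nn_integral_cmult_indicator) (auto simp: ennreal_mult)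
    finally show ?thesis .
  next
    case PInf
    have "?I2 \<le> ?I1"
      unfolding \<tau>1_def[symmetric] \<tau>2_def[symmetric]
      by (intro nn_integral_mono) (use PInf Cnn in \<open>auto simp: indicator_def\<close>)
    then show ?thesis by (simp add: add_increasing2)
  next
    case MInf then show ?thesis using t1 by simp
  qed
  then show ?thesis by (simp add: \<delta>_def)
qed

lemma filt_shift: "filt M (surplus x p E U) t = filt M (surplus 0 p E U) t"
proof -
  have eq: "surplus x p E U s \<omega> = x + surplus 0 p E U s \<omega>" for s \<omega>
    by (simp add: surplus_def)
  have "{surplus x p E U s -` B \<inter> space M | s B. 0 \<le> s \<and> s \<le> t \<and> B \<in> sets borel}
      = {surplus 0 p E U s -` B \<inter> space M | s B. 0 \<le> s \<and> s \<le> t \<and> B \<in> sets borel}"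
  proof (intro equalityI subsetI)
    fix A assume "A \<in> {surplus x p E U s -` B \<inter> space M | s B. 0 \<le> s \<and> s \<le> t \<and> B \<in> sets borel}"
    then obtain s B where A: "A = surplus x p E U s -` B \<inter> space M" "0 \<le> s" "s \<le> t" "B \<in> sets borel"
      by blast
    have "(\<lambda>y::real. x + y) -` B \<inter> space borel \<in> sets borel"
      by (rule measurable_sets[OF _ A(4)]) simp
    then have "(\<lambda>y::real. x + y) -` B \<in> sets borel" by simp
    moreover have "A = surplus 0 p E U s -` ((\<lambda>y::real. x + y) -` B) \<inter> space M"
      using A(1) eq by auto
    ultimately show "A \<in> {surplus 0 p E U s -` B \<inter> space M | s B. 0 \<le> s \<and> s \<le> t \<and> B \<in> sets borel}"
      using A by blast
  next
    fix A assume "A \<in> {surplus 0 p E U s -` B \<inter> space M | s B. 0 \<le> s \<and> s \<le> t \<and> B \<in> sets borel}"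
    then obtain s B where A: "A = surplus 0 p E U s -` B \<inter> space M" "0 \<le> s" "s \<le> t" "B \<in> sets borel"
      by blast
    have "(\<lambda>y::real. y - x) -` B \<inter> space borel \<in> sets borel"
      by (rule measurable_sets[OF _ A(4)]) simp
    then have "(\<lambda>y::real. y - x) -` B \<in> sets borel" by simp
    moreover have "A = surplus x p E U s -` ((\<lambda>y::real. y - x) -` B) \<inter> space M"
      using A(1) eq by auto
    ultimately show "A \<in> {surplus x p E U s -` B \<inter> space M | s B. 0 \<le> s \<and> s \<le> t \<and> B \<in> sets borel}"
      using A by blast
  qed
  then show ?thesis by (simp add: filt_def)
qed

lemma adm_shift: "admissible M (surplus x p E U) c cbar = admissible M (surplus 0 p E U) c cbar"
  by (simp only: admissible_def filt_shift[of M x p E U])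

lemma J_le:
  assumes "prob_space M" "0 < q" "C \<in> admissible M X c cbar" "0 < c"
  shows "Jval M q X C \<le> ennreal (cbar / q)"
proof -
  interpret prob_space M by fact
  have inner: "(\<integral>\<^sup>+ s. ennreal (indicator {s. 0 \<le> s \<and> ereal s < ruin_time X C \<omega>} s
        * exp (- q * s) * C s \<omega>) \<partial>lborel) \<le> ennreal (cbar / q)" if \<omega>: "\<omega> \<in> space M" for \<omega>
  proof -
    have Cb: "\<forall>t\<ge>0. c \<le> C t \<omega> \<and> C t \<omega> \<le> cbar" using assms(3) \<omega> by (simp add: admissible_def)
    have pt: "ennreal (indicator {s. 0 \<le> s \<and> ereal s < ruin_time X C \<omega>} s * exp (- q * s) * C s \<omega>)
        \<le> ennreal (cbar / q) * ennreal (exponential_density q s)" for s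
    proof (cases "0 \<le> s \<and> ereal s < ruin_time X C \<omega>")
      case True
      have "exp (- q * s) * C s \<omega> \<le> exp (- q * s) * cbar" using Cb True by simp
      also have "\<dots> = cbar / q * exponential_density q s"
        using True \<open>0 < q\<close> by (simp add: exponential_density_def mult.commute)
      finally show ?thesis using True Cb assms(2,4)
        by (subst ennreal_mult'[symmetric]) (auto intro!: ennreal_leI)
    next
      case False
      then have "indicator {s. 0 \<le> s \<and> ereal s < ruin_time X C \<omega>} s = (0::real)"
        by (simp add: indicator_def)
      then show ?thesis by simp
    qed
    have "(\<integral>\<^sup>+ s. ennreal (indicator {s. 0 \<le> s \<and> ereal s < ruin_time X C \<omega>} s
        * exp (- q * s) * C s \<omega>) \<partial>lborel) \<le> (\<integral>\<^sup>+ s. ennreal (cbar / q) * ennreal (exponential_density q s) \<partial>lborel)"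
      by (intro nn_integral_mono pt)
    also have "\<dots> = ennreal (cbar / q) * (\<integral>\<^sup>+ s. ennreal (exponential_density q s) \<partial>lborel)"
      by (rule nn_integral_cmult) simp
    also have "(\<integral>\<^sup>+ s. ennreal (exponential_density q s) \<partial>lborel) = 1"
      using nn_integral_erlang_ith_moment[OF \<open>0 < q\<close>, of 0 0] by simp
    finally show ?thesis by simp
  qed
  have "Jval M q X C \<le> (\<integral>\<^sup>+ \<omega>. ennreal (cbar / q) \<partial>M)"
    unfolding Jval_def by (intro nn_integral_mono inner)
  also have "\<dots> = ennreal (cbar / q)" by (simp add: emeasure_space_1)
  finally show ?thesis .
qed

theorem lemma9p3:
  fixes M :: "'a measure" and E U :: "nat \<Rightarrow> 'a \<Rightarrow> real"
    and F :: "real \<Rightarrow> real" and p \<beta> q cbar K :: real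
  assumes "prob_space M"
    and "p > 0" and "\<beta> > 0" and "q > 0" and "cbar > 0"
    and "prob_space.indep_vars M (\<lambda>_. borel)
           (\<lambda>i. case i of Inl n \<Rightarrow> E n | Inr n \<Rightarrow> U n) UNIV"
    and "\<And>n. distributed M lborel (E n) (exponential_density \<beta>)"
    and "\<And>n. U n \<in> borel_measurable M"
    and "\<And>n \<omega>. \<omega> \<in> space M \<Longrightarrow> U n \<omega> > 0"
    and "\<And>n y. measure M {\<omega> \<in> space M. U n \<omega> \<le> y} = F y"
    and "continuous_on UNIV F"
    and "\<And>a b. a < b \<Longrightarrow> 0 \<le> F b - F a \<and> F b - F a \<le> K * (b - a)"
    and "integrable M (U 0)"
    and "p > \<beta> * prob_space.expectation M (U 0)"
    and "cbar > p"
  shows "\<exists>K2 > 0. \<exists>K3 > 0. \<forall>x1 x2 c. 0 \<le> x1 \<longrightarrow> x1 \<le> x2 \<longrightarrow> p < c \<longrightarrow> c \<le> cbar \<longrightarrow>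
           Vfun M p q cbar E U x2 c - Vfun M p q cbar E U x1 c
             \<le> (K2 + K3 / (c - p)) * (x2 - x1)"
proof -
  interpret prob_space M by fact
  have good: "AE \<omega> in M. \<forall>T::nat. finite {n. arrival E n \<omega> \<le> real T}"
    by (rule arrivals_AE[OF assms(1) assms(3) assms(6) assms(7)])
  have main: "Vfun M p q cbar E U x2 c - Vfun M p q cbar E U x1 c \<le> cbar / (c - p) * (x2 - x1)"
    if x: "0 \<le> x1" "x1 \<le> x2" and c: "p < c" "c \<le> cbar" for x1 x2 c
  proof -
    define A where "A = admissible M (surplus 0 p E U) c cbar"
    define k where "k = ennreal (cbar * ((x2 - x1)/(c-p)))"
    have c0: "0 < c" using c assms(2) by simp
    have A1: "admissible M (surplus x1 p E U) c cbar = A" and A2: "admissible M (surplus x2 p E U) c cbar = A"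
      unfolding A_def by (rule adm_shift)+
    let ?J1 = "\<lambda>C. Jval M q (surplus x1 p E U) C"
    let ?J2 = "\<lambda>C. Jval M q (surplus x2 p E U) C"
    have Jb: "?J2 C \<le> ?J1 C + k" if C: "C \<in> A" for C
    proof -
      have "?J2 C \<le> (\<integral>\<^sup>+ \<omega>. (\<integral>\<^sup>+ s. ennreal (indicator {s. 0 \<le> s \<and> ereal s < ruin_time (surplus x1 p E U) C \<omega>} s
            * exp (- q * s) * C s \<omega>) \<partial>lborel) + k \<partial>M)"
        unfolding Jval_def
      proof (rule nn_integral_mono_AE)
        show "AE \<omega> in M. (\<integral>\<^sup>+ s. ennreal (indicator {s. 0 \<le> s \<and> ereal s < ruin_time (surplus x2 p E U) C \<omega>} s
            * exp (- q * s) * C s \<omega>) \<partial>lborel) \<le> (\<integral>\<^sup>+ s. ennreal (indicator {s. 0 \<le> s \<and> ereal s < ruin_time (surplus x1 p E U) C \<omega>} s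
            * exp (- q * s) * C s \<omega>) \<partial>lborel) + k"
          using good
        proof (rule AE_mp, intro AE_I2 impI)
          fix \<omega> assume \<omega>: "\<omega> \<in> space M" and fin: "\<forall>T::nat. finite {n. arrival E n \<omega> \<le> real T}"
          have Cb: "\<forall>t\<ge>0. c \<le> C t \<omega> \<and> C t \<omega> \<le> cbar" and mono: "mono_on {0..} (\<lambda>t. C t \<omega>)"
            using C \<omega> by (auto simp: A_def admissible_def)
          have Upos: "\<forall>i. 0 \<le> U i \<omega>" using assms(9)[OF \<omega>] by (simp add: less_imp_le)
          show "(\<integral>\<^sup>+ s. ennreal (indicator {s. 0 \<le> s \<and> ereal s < ruin_time (surplus x2 p E U) C \<omega>} s
            * exp (- q * s) * C s \<omega>) \<partial>lborel) \<le> (\<integral>\<^sup>+ s. ennreal (indicator {s. 0 \<le> s \<and> ereal s < ruin_time (surplus x1 p E U) C \<omega>} s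
            * exp (- q * s) * C s \<omega>) \<partial>lborel) + k"
            unfolding k_def
            by (rule inner_bound[where E=E and \<omega>=\<omega> and U=U and c=c and cbar=cbar and C=C and p=p
                  and xa=x1 and xb=x2 and q=q, OF fin Upos Cb mono c(1) x(2) assms(4) c0])
        qed
      qed
      also have "\<dots> \<le> ?J1 C + (\<integral>\<^sup>+ \<omega>. k \<partial>M)"
        unfolding Jval_def by (rule nn_integral_add_simple_le) simp
      also have "(\<integral>\<^sup>+ \<omega>. k \<partial>M) = k" by (simp add: emeasure_space_1)
      finally show ?thesis .
    qed
    have S1: "(SUP C\<in>A. ?J1 C) \<le> ennreal (cbar / q)"
      by (rule SUP_least) (use J_le[OF assms(1) assms(4) _ c0] A1 in auto)
    have S2: "(SUP C\<in>A. ?J2 C) \<le> (SUP C\<in>A. ?J1 C) + k"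
    proof (rule SUP_least)
      fix C assume "C \<in> A"
      then have "?J2 C \<le> ?J1 C + k" by (rule Jb)
      also have "\<dots> \<le> (SUP C\<in>A. ?J1 C) + k"
        by (intro add_right_mono SUP_upper \<open>C \<in> A\<close>)
      finally show "?J2 C \<le> (SUP C\<in>A. ?J1 C) + k" .
    qed
    have "(SUP C\<in>A. ?J1 C) < top" using S1 by (simp add: le_less_trans)
    then obtain a where a: "(SUP C\<in>A. ?J1 C) = ennreal a" "0 \<le> a"
      by (cases "(SUP C\<in>A. ?J1 C)") auto
    have d0: "0 \<le> cbar * ((x2 - x1)/(c-p))" using x c assms(5) by simp
    have "Vfun M p q cbar E U x2 c = enn2real (SUP C\<in>A. ?J2 C)"
      unfolding Vfun_def A2 ..
    also have "\<dots> \<le> enn2real (ennreal (a + cbar * ((x2 - x1)/(c-p))))"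
      using S2 a d0 by (intro enn2real_mono) (auto simp: k_def ennreal_plus)
    also have "\<dots> = a + cbar * ((x2 - x1)/(c-p))"
      by (rule enn2real_ennreal) (use a d0 in simp)
    also have "a = Vfun M p q cbar E U x1 c"
      unfolding Vfun_def A1 using a by simp
    finally show ?thesis by simp
  qed
  have all: "\<forall>x1 x2 c. 0 \<le> x1 \<longrightarrow> x1 \<le> x2 \<longrightarrow> p < c \<longrightarrow> c \<le> cbar \<longrightarrow>
           Vfun M p q cbar E U x2 c - Vfun M p q cbar E U x1 c
             \<le> (1 + cbar / (c - p)) * (x2 - x1)"
  proof (intro allI impI)
    fix x1 x2 c :: real
    assume h: "0 \<le> x1" "x1 \<le> x2" "p < c" "c \<le> cbar"
    have "Vfun M p q cbar E U x2 c - Vfun M p q cbar E U x1 c \<le> cbar / (c - p) * (x2 - x1)"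
      by (rule main[OF h])
    also have "\<dots> \<le> (1 + cbar / (c - p)) * (x2 - x1)"
      using h by (intro mult_right_mono) auto
    finally show "Vfun M p q cbar E U x2 c - Vfun M p q cbar E U x1 c \<le> (1 + cbar / (c - p)) * (x2 - x1)" .
  qed
  show ?thesis
    by (rule exI[where x=1], rule conjI, simp, rule exI[where x=cbar], rule conjI, rule assms(5), rule all)
qed

end
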